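(* Let $G$ be a finite non-abelian group. Then the non-centralizer graph $\Upsilon_G$ is regular if and only if $|\mathrm{Cent}(G)|=[G:Z(G)]$.
   Context: For a finite group $G$ and $x\in G$, $C_G(x)$ denotes the centralizer of $x$, $Z(G)$ the center, and $\mathrm{Cent}(G)=\{C_G(x)\mid x\in G\}$ the set of distinct centralizers of $G$. The non-centralizer graph $\Upsilon_G$ is the simple graph with vertex set $G$ in which two distinct vertices $x,y$ are adjacent if and only if $C_G(x)\neq C_G(y)$. A graph is regular if all its vertices have the same degree. *)

theory Defs
  imports "HOL-Algebra.Algebra"
begin

definition centralizer :: "('a, 'b) monoid_scheme \<Rightarrow> 'a \<Rightarrow> 'a set" where
  "centralizer G x = {y \<in> carrier G. x \<otimes>\<^bsub>G\<^esub> y = y \<otimes>\<^bsub>G\<^esub> x}"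

definition group_center :: "('a, 'b) monoid_scheme \<Rightarrow> 'a set" where
  "group_center G = {z \<in> carrier G. \<forall>y \<in> carrier G. z \<otimes>\<^bsub>G\<^esub> y = y \<otimes>\<^bsub>G\<^esub> z}"

definition Cent :: "('a, 'b) monoid_scheme \<Rightarrow> 'a set set" where
  "Cent G = centralizer G ` carrier G"

definition noncent_adj :: "('a, 'b) monoid_scheme \<Rightarrow> 'a \<Rightarrow> 'a \<Rightarrow> bool" where
  "noncent_adj G x y \<longleftrightarrow> x \<in> carrier G \<and> y \<in> carrier G \<and> x \<noteq> y \<and>
     centralizer G x \<noteq> centralizer G y"

definition noncent_degree :: "('a, 'b) monoid_scheme \<Rightarrow> 'a \<Rightarrow> nat" where
  "noncent_degree G x = card {y \<in> carrier G. noncent_adj G x y}"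

definition noncent_regular :: "('a, 'b) monoid_scheme \<Rightarrow> bool" where
  "noncent_regular G \<longleftrightarrow>
     (\<forall>x \<in> carrier G. \<forall>y \<in> carrier G. noncent_degree G x = noncent_degree G y)"

end

theory Submission
  imports Defs
begin

lemma cent_mult_center:
  fixes G (structure)
  assumes "group G" "x \<in> carrier G" "z \<in> group_center G"
  shows "centralizer G (x \<otimes>\<^bsub>G\<^esub> z) = centralizer G x"
proof -
  interpret group G by fact
  have zc: "z \<in> carrier G" and zcomm: "\<And>y. y \<in> carrier G \<Longrightarrow> z \<otimes> y = y \<otimes> z"
    using assms(3) unfolding group_center_def by auto
  have "(x \<otimes> z) \<otimes> w = w \<otimes> (x \<otimes> z) \<longleftrightarrow> x \<otimes> w = w \<otimes> x" if w: "w \<in> carrier G" for w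
  proof -
    have "(x \<otimes> z) \<otimes> w = (x \<otimes> w) \<otimes> z" using w zc assms(2) zcomm[OF w] by (simp add: m_assoc)
    moreover have "w \<otimes> (x \<otimes> z) = (w \<otimes> x) \<otimes> z" using w zc assms(2) by (simp add: m_assoc)
    ultimately show ?thesis using w zc assms(2) by simp
  qed
  then show ?thesis unfolding centralizer_def by auto
qed

lemma center_subgroup:
  fixes G (structure)
  assumes "group G"
  shows "subgroup (group_center G) G"
proof -
  interpret group G by fact
  show ?thesis
  proof
    show "group_center G \<subseteq> carrier G" unfolding group_center_def by auto
    show "\<one> \<in> group_center G" unfolding group_center_def by auto
  next
    fix x y assume x: "x \<in> group_center G" and y: "y \<in> group_center G"
    then have xc: "x \<in> carrier G" and yc: "y \<in> carrier G"
      and cx: "\<And>w. w \<in> carrier G \<Longrightarrow> x \<otimes> w = w \<otimes> x"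
      and cy: "\<And>w. w \<in> carrier G \<Longrightarrow> y \<otimes> w = w \<otimes> y"
      unfolding group_center_def by auto
    have "x \<otimes> y \<otimes> w = w \<otimes> (x \<otimes> y)" if w: "w \<in> carrier G" for w
    proof -
      have "x \<otimes> y \<otimes> w = x \<otimes> (w \<otimes> y)" using w xc yc cy[OF w] by (simp add: m_assoc)
      also have "\<dots> = (x \<otimes> w) \<otimes> y" using w xc yc by (simp add: m_assoc)
      also have "\<dots> = w \<otimes> (x \<otimes> y)" using w xc yc cx[OF w] by (simp add: m_assoc)
      finally show ?thesis .
    qed
    then show "x \<otimes> y \<in> group_center G" using xc yc unfolding group_center_def by auto
    have "inv x \<otimes> w = w \<otimes> inv x" if w: "w \<in> carrier G" for w
    proof -
      have "x \<otimes> (inv x \<otimes> w) = x \<otimes> (w \<otimes> inv x)"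
        using w xc cx[OF w]
        by (metis inv_closed m_assoc r_inv l_one r_one inv_solve_right' m_closed)
      then show ?thesis using w xc by (meson inv_closed l_cancel m_closed)
    qed
    then show "inv x \<in> group_center G" using xc unfolding group_center_def by auto
  qed
qed

lemma corollary_aux:
  fixes G (structure)
  assumes "group G" and "finite (carrier G)" and "\<not> comm_group G"
  shows "noncent_regular G \<longleftrightarrow>
         card (Cent G) = card (rcosets\<^bsub>G\<^esub> (group_center G))"
proof -
  interpret group G by fact
  define Z where "Z = group_center G"
  define fib where "fib c = {y \<in> carrier G. centralizer G y = c}" for c
  have fin: "finite (carrier G)" by fact
  have Zsub: "subgroup Z G" unfolding Z_def using center_subgroup[OF assms(1)] .
  have lag: "card (rcosets Z) * card Z = card (carrier G)"
    using lagrange[OF Zsub] by (simp add: order_def)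
  have Zpos: "card Z > 0"
  proof -
    have "finite Z" using fin subgroup.subset[OF Zsub] finite_subset by blast
    moreover have "Z \<noteq> {}" using subgroup.one_closed[OF Zsub] by blast
    ultimately show ?thesis by (simp add: card_gt_0_iff)
  qed
  have finCent: "finite (Cent G)" unfolding Cent_def using fin by simp
  have cardG: "card (carrier G) = (\<Sum>c\<in>Cent G. card (fib c))"
  proof -
    have "carrier G = (\<Union>c\<in>Cent G. fib c)" unfolding fib_def Cent_def by auto
    moreover have "card (\<Union>c\<in>Cent G. fib c) = (\<Sum>c\<in>Cent G. card (fib c))"
      by (rule card_UN_disjoint) (use finCent fin in \<open>auto simp: fib_def\<close>)
    ultimately show ?thesis by simp
  qed
  have fibge: "card Z \<le> card (fib c)" if c: "c \<in> Cent G" for c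
  proof -
    obtain x where x: "x \<in> carrier G" "c = centralizer G x" using c unfolding Cent_def by auto
    have "inj_on (\<lambda>z. x \<otimes> z) Z"
    proof (rule inj_onI)
      fix a b assume a: "a \<in> Z" and b: "b \<in> Z" and e: "x \<otimes> a = x \<otimes> b"
      have "a \<in> carrier G" "b \<in> carrier G" using a b subgroup.subset[OF Zsub] by auto
      then show "a = b" using e x(1) l_cancel by blast
    qed
    moreover have "(\<lambda>z. x \<otimes> z) ` Z \<subseteq> fib c"
      using x subgroup.subset[OF Zsub] cent_mult_center[OF assms(1) x(1)]
      unfolding fib_def Z_def by auto
    moreover have "finite (fib c)" using fin unfolding fib_def by auto
    ultimately show ?thesis using card_inj_on_le by blast
  qed
  have Cone: "centralizer G \<one> = carrier G" unfolding centralizer_def by auto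
  have fibone: "fib (carrier G) = Z"
    unfolding fib_def Z_def group_center_def centralizer_def by auto
  have deg: "noncent_degree G x = card (carrier G) - card (fib (centralizer G x))"
    if x: "x \<in> carrier G" for x
  proof -
    have "{y \<in> carrier G. noncent_adj G x y} = carrier G - fib (centralizer G x)"
      using x unfolding noncent_adj_def fib_def by auto
    moreover have "fib (centralizer G x) \<subseteq> carrier G" unfolding fib_def by auto
    ultimately show ?thesis unfolding noncent_degree_def using fin
      by (simp add: card_Diff_subset finite_subset)
  qed
  have fible: "card (fib c) \<le> card (carrier G)" for c
    using fin unfolding fib_def by (simp add: card_mono)
  have reg_iff: "noncent_regular G \<longleftrightarrow> (\<forall>c\<in>Cent G. card (fib c) = card Z)"
  proof
    assume r: "noncent_regular G"
    show "\<forall>c\<in>Cent G. card (fib c) = card Z"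
    proof
      fix c assume c: "c \<in> Cent G"
      obtain x where x: "x \<in> carrier G" "c = centralizer G x" using c unfolding Cent_def by auto
      have "noncent_degree G x = noncent_degree G \<one>" using r x(1) one_closed unfolding noncent_regular_def by blast
      moreover have "noncent_degree G x = card (carrier G) - card (fib c)"
        using deg[OF x(1)] x(2) by simp
      moreover have "noncent_degree G \<one> = card (carrier G) - card Z"
        using deg[OF one_closed] Cone fibone by simp
      ultimately have "card (carrier G) - card (fib c) = card (carrier G) - card Z"
        by simp
      then show "card (fib c) = card Z" using fible[of c] fible[of "carrier G"] unfolding fibone by linarith
    qed
  next
    assume h: "\<forall>c\<in>Cent G. card (fib c) = card Z"
    show "noncent_regular G" unfolding noncent_regular_def
    proof (intro ballI)
      fix x y assume xy: "x \<in> carrier G" "y \<in> carrier G"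
      have "centralizer G x \<in> Cent G" "centralizer G y \<in> Cent G"
        using xy unfolding Cent_def by auto
      then show "noncent_degree G x = noncent_degree G y"
        using deg[OF xy(1)] deg[OF xy(2)] h by simp
    qed
  qed
  have sum_iff: "(\<forall>c\<in>Cent G. card (fib c) = card Z) \<longleftrightarrow> card (Cent G) * card Z = card (carrier G)"
  proof
    assume "\<forall>c\<in>Cent G. card (fib c) = card Z"
    then show "card (Cent G) * card Z = card (carrier G)" using cardG by simp
  next
    assume e: "card (Cent G) * card Z = card (carrier G)"
    show "\<forall>c\<in>Cent G. card (fib c) = card Z"
    proof (rule ccontr)
      assume "\<not> (\<forall>c\<in>Cent G. card (fib c) = card Z)"
      then obtain c where c: "c \<in> Cent G" "card (fib c) \<noteq> card Z" by auto
      then have "card Z < card (fib c)" using fibge[OF c(1)] by simp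
      then have "(\<Sum>c\<in>Cent G. card Z) < (\<Sum>c\<in>Cent G. card (fib c))"
        using sum_strict_mono_ex1[OF finCent, of "\<lambda>_. card Z" "\<lambda>c. card (fib c)"] fibge c(1) by blast
      then show False using e cardG by simp
    qed
  qed
  have "card (Cent G) = card (rcosets Z) \<longleftrightarrow> card (Cent G) * card Z = card (carrier G)"
  proof -
    have "card (Cent G) = card (rcosets Z) \<longleftrightarrow> card (Cent G) * card Z = card (rcosets Z) * card Z"
      using Zpos by simp
    then show ?thesis using lag by simp
  qed
  then show ?thesis using reg_iff sum_iff Z_def by simp
qed

theorem corollary2p5:
  fixes G :: "('a, 'b) monoid_scheme"
  assumes "group G" and "finite (carrier G)" and "\<not> comm_group G"
  shows "noncent_regular G \<longleftrightarrow>
         card (Cent G) = card (rcosets\<^bsub>G\<^esub> (group_center G))"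
  using corollary_aux[OF assms] .

end
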